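(* Let $\mathcal{G}$ be the complete digraph on $n$ nodes (all ordered pairs $(i,j)$, including $i=j$, are edges), and let $\tau\in\mathbb{Z}_{>0}$ with $\tau\le n$ and $\tau$ dividing $n$. Let $\Pi_0\in\mathbb{R}^{\tau\times\tau}$ be any irreducible permutation matrix, and set $P^*=\Pi_0\otimes \frac{\tau}{n}\mathbb{1}_{n/\tau}\mathbb{1}_{n/\tau}^\top$. Then $P^*$ is an optimal solution of the problem of maximizing $\min_{i,j}\mathbb{P}(T_{ij}(P)\le\tau)$ over all row-stochastic $P\in\mathbb{R}^{n\times n}$ with nonnegative entries, and $\min_{i,j}\mathbb{P}(T_{ij}(P^* )\le\tau)=\frac{\tau}{n}$.
   Context: For a Markov chain $(X_k)_{k\ge0}$ with transition matrix $P$, $T_{ij}=\min\{k\ge1: X_k=j\}$ given $X_0=i$. $\otimes$ denotes the Kronecker product and $\mathbb{1}_m$ the all-ones column vector in $\mathbb{R}^m$. *)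

theory Defs
  imports Complex_Main "HOL-Library.FuncSet"
begin

text \<open>Square matrices of size n are functions nat => nat => real, only entries with
  indices < n are meaningful (indices 0..n-1).\<close>

definition row_stochastic :: "nat \<Rightarrow> (nat \<Rightarrow> nat \<Rightarrow> real) \<Rightarrow> bool" where
  "row_stochastic n P \<longleftrightarrow> (\<forall>i<n. \<forall>j<n. P i j \<ge> 0) \<and> (\<forall>i<n. (\<Sum>j<n. P i j) = 1)"

fun matpow :: "nat \<Rightarrow> (nat \<Rightarrow> nat \<Rightarrow> real) \<Rightarrow> nat \<Rightarrow> (nat \<Rightarrow> nat \<Rightarrow> real)" where
  "matpow n A 0 = (\<lambda>i j. if i = j then 1 else 0)"
| "matpow n A (Suc k) = (\<lambda>i j. \<Sum>l<n. matpow n A k i l * A l j)"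

definition permutation_matrix :: "nat \<Rightarrow> (nat \<Rightarrow> nat \<Rightarrow> real) \<Rightarrow> bool" where
  "permutation_matrix n A \<longleftrightarrow>
     (\<exists>\<sigma>. bij_betw \<sigma> {..<n} {..<n} \<and> (\<forall>i<n. \<forall>j<n. A i j = (if \<sigma> i = j then 1 else 0)))"

definition irreducible_matrix :: "nat \<Rightarrow> (nat \<Rightarrow> nat \<Rightarrow> real) \<Rightarrow> bool" where
  "irreducible_matrix n A \<longleftrightarrow> (\<forall>i<n. \<forall>j<n. \<exists>k. matpow n A k i j > 0)"

text \<open>Kronecker product A \<otimes> B where B is a k x k matrix.\<close>
definition kron :: "(nat \<Rightarrow> nat \<Rightarrow> real) \<Rightarrow> nat \<Rightarrow> (nat \<Rightarrow> nat \<Rightarrow> real) \<Rightarrow> (nat \<Rightarrow> nat \<Rightarrow> real)" where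
  "kron A k B = (\<lambda>a b. A (a div k) (b div k) * B (a mod k) (b mod k))"

text \<open>P(T_ij \<le> t) for the Markov chain with transition matrix P on states {..<n},
  X_0 = i: total probability (under the path law) of trajectories X_1..X_t that visit j
  at some time k in {1..t}.\<close>
definition hit_prob :: "nat \<Rightarrow> (nat \<Rightarrow> nat \<Rightarrow> real) \<Rightarrow> nat \<Rightarrow> nat \<Rightarrow> nat \<Rightarrow> real" where
  "hit_prob n P t i j =
     (\<Sum>x\<in>{x\<in>PiE {1..t} (\<lambda>_. {..<n}). \<exists>k\<in>{1..t}. x k = j}.
        \<Prod>m\<in>{1..t}. P ((x(0 := i)) (m - 1)) (x m))"

definition min_hit_prob :: "nat \<Rightarrow> (nat \<Rightarrow> nat \<Rightarrow> real) \<Rightarrow> nat \<Rightarrow> real" where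
  "min_hit_prob n P t = Min {hit_prob n P t i j | i j. i < n \<and> j < n}"

end

theory Submission
  imports Defs
begin

definition pw :: "(nat \<Rightarrow> nat \<Rightarrow> real) \<Rightarrow> nat \<Rightarrow> nat \<Rightarrow> (nat \<Rightarrow> nat) \<Rightarrow> real" where
  "pw P t i x = (\<Prod>m\<in>{1..t}. P ((x(0 := i)) (m - 1)) (x m))"

abbreviation PS :: "nat \<Rightarrow> nat \<Rightarrow> (nat \<Rightarrow> nat) set" where
  "PS t n \<equiv> PiE {1..t} (\<lambda>_. {..<n})"

lemma split_sum:
  fixes F :: "(nat \<Rightarrow> nat) \<Rightarrow> real"
  shows "(\<Sum>x\<in>PiE {1..Suc t} (\<lambda>_. S). F x) = (\<Sum>y\<in>PiE {1..t} (\<lambda>_. S). \<Sum>v\<in>S. F (y(Suc t := v)))"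
proof -
  have e: "{1..Suc t} = insert (Suc t) {1..t}" by auto
  have "(\<Sum>x\<in>PiE {1..Suc t} (\<lambda>_. S). F x) =
        (\<Sum>x\<in>(\<lambda>(y, g). g(Suc t := y)) ` (S \<times> PiE {1..t} (\<lambda>_. S)). F x)"
    unfolding e PiE_insert_eq by simp
  also have "\<dots> = (\<Sum>p\<in>S \<times> PiE {1..t} (\<lambda>_. S). F ((\<lambda>(y, g). g(Suc t := y)) p))"
    by (subst sum.reindex) (auto intro: inj_combinator)
  also have "\<dots> = (\<Sum>v\<in>S. \<Sum>y\<in>PiE {1..t} (\<lambda>_. S). F (y(Suc t := v)))"
    by (simp add: sum.cartesian_product split_def)
  also have "\<dots> = (\<Sum>y\<in>PiE {1..t} (\<lambda>_. S). \<Sum>v\<in>S. F (y(Suc t := v)))"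
    by (rule sum.swap)
  finally show ?thesis .
qed

lemma pw_step: "pw P (Suc t) i (y(Suc t := v)) = pw P t i y * P ((y(0 := i)) t) v"
proof -
  have "pw P (Suc t) i (y(Suc t := v)) = (\<Prod>m\<in>{1..t}. P (((y(Suc t := v))(0 := i)) (m - 1)) ((y(Suc t := v)) m)) * P (((y(Suc t := v))(0 := i)) t) v"
    unfolding pw_def by simp
  also have "(\<Prod>m\<in>{1..t}. P (((y(Suc t := v))(0 := i)) (m - 1)) ((y(Suc t := v)) m)) = pw P t i y"
    unfolding pw_def by (rule prod.cong) auto
  also have "((y(Suc t := v))(0 := i)) t = (y(0 := i)) t" by simp
  finally show ?thesis .
qed

lemma PS_range: "y \<in> PS t n \<Longrightarrow> i < n \<Longrightarrow> m \<le> t \<Longrightarrow> (y(0 := i)) m < n"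
  by (cases "m = 0") (auto simp: PiE_def Pi_def)

lemma pw_nonneg: "row_stochastic n P \<Longrightarrow> i < n \<Longrightarrow> x \<in> PS t n \<Longrightarrow> pw P t i x \<ge> 0"
  unfolding pw_def row_stochastic_def
  apply (rule prod_nonneg)
  apply (metis PS_range PiE_mem atLeastAtMost_iff diff_le_self le_trans lessThan_iff)
  done

lemma ext_sum:
  assumes rs: "row_stochastic n P" and i: "i < n"
    and inv: "\<And>y v. f (y(Suc t := v)) = f y"
  shows "(\<Sum>x\<in>PS (Suc t) n. pw P (Suc t) i x * f x) = (\<Sum>y\<in>PS t n. pw P t i y * f y)"
proof -
  have "(\<Sum>x\<in>PS (Suc t) n. pw P (Suc t) i x * f x) =
     (\<Sum>y\<in>PS t n. \<Sum>v<n. pw P t i y * f y * P ((y(0 := i)) t) v)"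
    by (subst split_sum) (simp add: pw_step inv mult_ac)
  also have "\<dots> = (\<Sum>y\<in>PS t n. pw P t i y * f y)"
  proof (rule sum.cong)
    fix y assume y: "y \<in> PS t n"
    have "(y(0 := i)) t < n" using PS_range[OF y i] by simp
    then have "(\<Sum>v<n. P ((y(0 := i)) t) v) = 1" using rs unfolding row_stochastic_def by blast
    then show "(\<Sum>v<n. pw P t i y * f y * P ((y(0 := i)) t) v) = pw P t i y * f y"
      by (simp add: sum_distrib_left[symmetric])
  qed simp
  finally show ?thesis .
qed

lemma mass: assumes "row_stochastic n P" "i < n" shows "(\<Sum>x\<in>PS t n. pw P t i x) = 1"
proof (induction t)
  case 0 then show ?case by (simp add: pw_def)
next
  case (Suc t)
  show ?case using ext_sum[OF assms, of "\<lambda>_. 1" t] Suc by simp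
qed

lemma marg:
  assumes i: "i < n"
  shows "(\<Sum>x\<in>PS k n. pw P k i x * g ((x(0 := i)) k)) = (\<Sum>l<n. matpow n P k i l * g l)"
proof (induction k arbitrary: g)
  case 0
  have "(\<Sum>l<n. (if i = l then 1 else 0) * g l) = (\<Sum>l<n. if i = l then g l else 0)"
    by (rule sum.cong) auto
  also have "\<dots> = g i" using i by (simp add: sum.delta)
  finally have "(\<Sum>l<n. (if i = l then 1 else 0) * g l) = g i" .
  then show ?case by (simp add: pw_def)
next
  case (Suc k)
  define h where "h u = (\<Sum>v<n. P u v * g v)" for u
  have "(\<Sum>x\<in>PS (Suc k) n. pw P (Suc k) i x * g ((x(0 := i)) (Suc k))) =
     (\<Sum>y\<in>PS k n. \<Sum>v<n. pw P k i y * (P ((y(0 := i)) k) v * g v))"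
    by (subst split_sum) (simp add: pw_step mult_ac)
  also have "\<dots> = (\<Sum>y\<in>PS k n. pw P k i y * h ((y(0 := i)) k))"
    by (simp add: h_def sum_distrib_left)
  also have "\<dots> = (\<Sum>l<n. matpow n P k i l * h l)" by (rule Suc)
  also have "\<dots> = (\<Sum>l<n. \<Sum>v<n. matpow n P k i l * P l v * g v)"
    by (simp add: h_def sum_distrib_left mult_ac)
  also have "\<dots> = (\<Sum>v<n. \<Sum>l<n. matpow n P k i l * P l v * g v)" by (rule sum.swap)
  also have "\<dots> = (\<Sum>v<n. matpow n P (Suc k) i v * g v)"
    by (simp add: sum_distrib_right)
  finally show ?case .
qed

lemma hit_as_sum: "hit_prob n P t i j = (\<Sum>x\<in>PS t n. pw P t i x * (if \<exists>k\<in>{1..t}. x k = j then 1 else 0))"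
proof -
  have "(\<Sum>x\<in>PS t n. pw P t i x * (if \<exists>k\<in>{1..t}. x k = j then 1 else 0)) =
     (\<Sum>x\<in>PS t n. if \<exists>k\<in>{1..t}. x k = j then pw P t i x else 0)"
    by (rule sum.cong) auto
  also have "\<dots> = (\<Sum>x\<in>{x\<in>PS t n. \<exists>k\<in>{1..t}. x k = j}. pw P t i x)"
    by (rule sum.inter_filter[symmetric]) (simp add: finite_PiE)
  finally show ?thesis unfolding hit_prob_def pw_def by simp
qed

lemma ext_many:
  assumes rs: "row_stochastic n P" and i: "i < n" and kt: "k \<le> t"
  shows "(\<Sum>x\<in>PS t n. pw P t i x * (if x k = j then 1 else 0)) = (\<Sum>x\<in>PS k n. pw P k i x * (if x k = j then 1 else 0))"
  using kt
proof (induction t rule: dec_induct)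
  case base then show ?case by simp
next
  case (step t)
  have "(\<Sum>x\<in>PS (Suc t) n. pw P (Suc t) i x * (if x k = j then 1 else 0)) = (\<Sum>x\<in>PS t n. pw P t i x * (if x k = j then 1 else 0))"
    by (rule ext_sum[OF rs i]) (use step in auto)
  then show ?case using step by simp
qed

lemma hit_lower:
  assumes rs: "row_stochastic n P" and i: "i < n" and j: "j < n" and k: "1 \<le> k" "k \<le> t"
  shows "matpow n P k i j \<le> hit_prob n P t i j"
proof -
  have "(\<Sum>x\<in>PS t n. pw P t i x * (if x k = j then 1 else 0)) \<le> hit_prob n P t i j"
    unfolding hit_as_sum
    by (rule sum_mono, rule mult_left_mono) (use k pw_nonneg[OF rs i] in auto)
  moreover have "(\<Sum>x\<in>PS t n. pw P t i x * (if x k = j then 1 else 0)) = (\<Sum>x\<in>PS k n. pw P k i x * (if (x(0:=i)) k = j then 1 else 0))"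
    using ext_many[OF rs i k(2)] k by simp
  moreover have "\<dots> = (\<Sum>l<n. matpow n P k i l * (if l = j then 1 else 0))"
    by (rule marg[OF i])
  moreover have "\<dots> = matpow n P k i j"
  proof -
    have "(\<Sum>l<n. matpow n P k i l * (if l = j then 1 else 0)) = (\<Sum>l<n. if l = j then matpow n P k i l else 0)"
      by (rule sum.cong) auto
    then show ?thesis using j by (simp add: sum.delta')
  qed
  ultimately show ?thesis by linarith
qed

lemma hit_sum_le:
  assumes rs: "row_stochastic n P" and i: "i < n"
  shows "(\<Sum>j<n. hit_prob n P t i j) \<le> real t"
proof -
  have "(\<Sum>j<n. hit_prob n P t i j) = (\<Sum>x\<in>PS t n. pw P t i x * (\<Sum>j<n. if \<exists>k\<in>{1..t}. x k = j then 1 else 0))"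
    unfolding hit_as_sum by (simp add: sum_distrib_left sum.swap[of _ "{..<n}"])
  also have "\<dots> \<le> (\<Sum>x\<in>PS t n. pw P t i x * real t)"
  proof (rule sum_mono, rule mult_left_mono)
    fix x assume x: "x \<in> PS t n"
    have "(\<Sum>j<n. if \<exists>k\<in>{1..t}. x k = j then 1 else 0 :: real) = real (card ({..<n} \<inter> {j. \<exists>k\<in>{1..t}. x k = j}))"
      by (simp add: sum.If_cases)
    also have "card ({..<n} \<inter> {j. \<exists>k\<in>{1..t}. x k = j}) \<le> card (x ` {1..t})"
      by (rule card_mono) auto
    also have "\<dots> \<le> t" using card_image_le[of "{1..t}" x] by simp
    finally show "(\<Sum>j<n. if \<exists>k\<in>{1..t}. x k = j then 1 else 0 :: real) \<le> real t" by simp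
    show "pw P t i x \<ge> 0" by (rule pw_nonneg[OF rs i x])
  qed
  also have "\<dots> = real t" using mass[OF rs i, of t] by (simp add: sum_distrib_right[symmetric])
  finally show ?thesis .
qed

lemma perm_pow:
  assumes bij: "bij_betw \<sigma> {..<\<tau>} {..<\<tau>}"
    and A: "\<forall>i<\<tau>. \<forall>j<\<tau>. A i j = (if \<sigma> i = j then 1 else 0)"
    and c: "c < \<tau>" and d: "d < \<tau>"
  shows "matpow \<tau> A k c d = (if (\<sigma> ^^ k) c = d then 1 else 0)"
  using d
proof (induction k arbitrary: d)
  case 0 then show ?case by simp
next
  case (Suc k)
  have r: "(\<sigma> ^^ k) c < \<tau>"
    using bij_betw_funpow[OF bij, of k] c by (auto dest: bij_betwE)
  have "matpow \<tau> A (Suc k) c d = (\<Sum>l<\<tau>. (if (\<sigma> ^^ k) c = l then 1 else 0) * A l d)"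
    using Suc by simp
  also have "\<dots> = (\<Sum>l<\<tau>. if l = (\<sigma> ^^ k) c then A l d else 0)"
    by (rule sum.cong) auto
  also have "\<dots> = A ((\<sigma> ^^ k) c) d" using r by (simp add: sum.delta')
  also have "\<dots> = (if (\<sigma> ^^ Suc k) c = d then 1 else 0)" using A r Suc.prems by simp
  finally show ?case .
qed

lemma orbit:
  assumes bij: "bij_betw \<sigma> {..<\<tau>} {..<\<tau>}" and c: "c < \<tau>"
  shows "\<exists>k'\<in>{1..\<tau>}. (\<sigma> ^^ k') c = (\<sigma> ^^ k) c"
proof -
  have rng: "(\<sigma> ^^ k) c < \<tau>" for k
    using bij_betw_funpow[OF bij, of k] c by (auto dest: bij_betwE)
  have "\<not> inj_on (\<lambda>k. (\<sigma> ^^ k) c) {0..\<tau>}"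
  proof
    assume "inj_on (\<lambda>k. (\<sigma> ^^ k) c) {0..\<tau>}"
    then have "card {0..\<tau>} \<le> card {..<\<tau>}"
      by (rule card_inj_on_le) (use rng in auto)
    then show False by simp
  qed
  then obtain a b where ab: "a \<le> \<tau>" "b \<le> \<tau>" "a \<noteq> b" "(\<sigma> ^^ a) c = (\<sigma> ^^ b) c"
    unfolding inj_on_def by auto
  then obtain a b where ab: "a < b" "b \<le> \<tau>" "(\<sigma> ^^ a) c = (\<sigma> ^^ b) c"
    by (metis linorder_neqE_nat order_less_imp_le order_le_less_trans)
  define p where "p = b - a"
  have p: "1 \<le> p" "p \<le> \<tau>" using ab by (auto simp: p_def)
  have "(\<sigma> ^^ a) ((\<sigma> ^^ p) c) = (\<sigma> ^^ a) c"
    using ab unfolding p_def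
    by (metis ab(1) funpow_add comp_apply le_add_diff_inverse less_imp_le)
  moreover have "inj_on (\<sigma> ^^ a) {..<\<tau>}"
    using bij_betw_funpow[OF bij, of a] by (simp add: bij_betw_def)
  ultimately have pc: "(\<sigma> ^^ p) c = c" using rng c unfolding inj_on_def by auto
  have pq: "(\<sigma> ^^ (p * q)) c = c" for q
  proof (induction q)
    case 0 then show ?case by simp
  next
    case (Suc q)
    have "(\<sigma> ^^ (p * Suc q)) c = (\<sigma> ^^ (p * q)) ((\<sigma> ^^ p) c)"
      by (metis add.commute comp_apply funpow_add mult_Suc_right)
    then show ?case using pc Suc by simp
  qed
  have "(\<sigma> ^^ k) c = (\<sigma> ^^ (k mod p)) ((\<sigma> ^^ (p * (k div p))) c)"
    by (metis comp_apply funpow_add mod_mult_div_eq)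
  then have km: "(\<sigma> ^^ k) c = (\<sigma> ^^ (k mod p)) c" using pq by simp
  show ?thesis
  proof (cases "k mod p = 0")
    case True
    then show ?thesis using km pc p by (intro bexI[of _ p]) auto
  next
    case False
    have "k mod p \<le> \<tau>" using p mod_le_divisor[of p k] by linarith
    then show ?thesis using km False p by (intro bexI[of _ "k mod p"]) auto
  qed
qed

lemma card_block:
  assumes m: "0 < m" and d: "d < \<tau>"
  shows "card {l\<in>{..<\<tau> * m}. l div m = d} = m"
proof -
  have "{l\<in>{..<\<tau> * m}. l div m = d} = {d * m..<d * m + m}"
  proof (intro set_eqI iffI)
    fix l assume "l \<in> {l\<in>{..<\<tau> * m}. l div m = d}"
    then have "l div m = d" by simp
    moreover have "l = l div m * m + l mod m" by simp
    moreover have "l mod m < m" using m by simp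
    ultimately show "l \<in> {d * m..<d * m + m}" by auto
  next
    fix l assume l: "l \<in> {d * m..<d * m + m}"
    have "d * m + m \<le> \<tau> * m" using d by (metis Suc_leI add.commute mult_Suc mult_le_mono1)
    moreover have "l div m = d" using l m by (intro div_nat_eqI) (auto simp: mult.commute)
    ultimately show "l \<in> {l\<in>{..<\<tau> * m}. l div m = d}" using l by auto
  qed
  then show ?thesis by simp
qed

lemma finite_hitset: "finite {hit_prob n P t i j | i j. i < n \<and> j < n}"
proof -
  have "{hit_prob n P t i j | i j. i < n \<and> j < n} = (\<lambda>(i, j). hit_prob n P t i j) ` ({..<n} \<times> {..<n})"
    by auto
  then show ?thesis by simp
qed

lemma min_upper:
  assumes rs: "row_stochastic n P" and n: "0 < n"
  shows "min_hit_prob n P t \<le> real t / real n"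
proof -
  have "\<exists>j<n. hit_prob n P t 0 j \<le> real t / real n"
  proof (rule ccontr)
    assume "\<not> ?thesis"
    then have "\<forall>j\<in>{..<n}. real t / real n < hit_prob n P t 0 j" by auto
    then have "(\<Sum>j<n. real t / real n) < (\<Sum>j<n. hit_prob n P t 0 j)"
      using n by (intro sum_strict_mono) auto
    moreover have "(\<Sum>j<n. real t / real n) = real t" using n by simp
    ultimately show False using hit_sum_le[OF rs n, of t] by linarith
  qed
  then obtain j where j: "j < n" "hit_prob n P t 0 j \<le> real t / real n" by blast
  have "min_hit_prob n P t \<le> hit_prob n P t 0 j"
    unfolding min_hit_prob_def by (rule Min_le[OF finite_hitset]) (use j n in blast)
  then show ?thesis using j by simp
qed

theorem lemma1:
  fixes n \<tau> :: nat and \<Pi>0 :: "nat \<Rightarrow> nat \<Rightarrow> real"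
  assumes "0 < \<tau>" and "\<tau> \<le> n" and "\<tau> dvd n"
    and "permutation_matrix \<tau> \<Pi>0" and "irreducible_matrix \<tau> \<Pi>0"
  defines "Pstar \<equiv> kron \<Pi>0 (n div \<tau>) (\<lambda>_ _. real \<tau> / real n)"
  shows "row_stochastic n Pstar
    \<and> (\<forall>P. row_stochastic n P \<longrightarrow> min_hit_prob n P \<tau> \<le> min_hit_prob n Pstar \<tau>)
    \<and> min_hit_prob n Pstar \<tau> = real \<tau> / real n"
proof -
  define m where "m = n div \<tau>"
  have nm: "n = \<tau> * m" using assms(3) by (simp add: m_def)
  have n0: "0 < n" using assms(1,2) by simp
  have m0: "0 < m" using n0 nm by (cases m) auto
  obtain \<sigma> where bij: "bij_betw \<sigma> {..<\<tau>} {..<\<tau>}"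
    and Pi: "\<forall>i<\<tau>. \<forall>j<\<tau>. \<Pi>0 i j = (if \<sigma> i = j then 1 else 0)"
    using assms(4) unfolding permutation_matrix_def by blast
  have blk: "a < n \<Longrightarrow> a div m < \<tau>" for a
    using nm by (simp add: less_mult_imp_div_less mult.commute)
  have srng: "c < \<tau> \<Longrightarrow> \<sigma> c < \<tau>" for c using bij by (auto dest: bij_betwE)
  have tn: "real \<tau> / real n = 1 / real m" using nm assms(1) by simp
  have Ps: "Pstar a b = (if \<sigma> (a div m) = b div m then 1 / real m else 0)" if "a < n" "b < n" for a b
    using Pi blk[OF that(1)] blk[OF that(2)] tn
    unfolding Pstar_def kron_def m_def[symmetric] by simp
  have blocksum: "(\<Sum>l<n. if l div m = d then X else 0) = real m * X" if "d < \<tau>" for d X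
  proof -
    have "(\<Sum>l<n. if l div m = d then X else 0) = (\<Sum>l\<in>{l\<in>{..<n}. l div m = d}. X)"
      by (rule sum.inter_filter[symmetric]) simp
    also have "\<dots> = real m * X" using card_block[OF m0 that] nm by simp
    finally show ?thesis .
  qed
  have rs: "row_stochastic n Pstar"
    unfolding row_stochastic_def
  proof (intro conjI allI impI)
    fix i j assume "i < n" "j < n"
    then show "0 \<le> Pstar i j" using Ps by simp
  next
    fix i assume i: "i < n"
    have "(\<Sum>j<n. Pstar i j) = (\<Sum>j<n. if j div m = \<sigma> (i div m) then 1 / real m else 0)"
      by (rule sum.cong) (use Ps i in auto)
    also have "\<dots> = 1" using blocksum[OF srng[OF blk[OF i]]] m0 by simp
    finally show "(\<Sum>j<n. Pstar i j) = 1" .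
  qed
  have pow: "matpow n Pstar (Suc k) a b = (if (\<sigma> ^^ Suc k) (a div m) = b div m then 1 / real m else 0)"
    if "a < n" "b < n" for k a b
    using that(2)
  proof (induction k arbitrary: b)
    case 0
    have "matpow n Pstar (Suc 0) a b = (\<Sum>l<n. (if a = l then 1 else 0) * Pstar l b)"
      by simp
    also have "\<dots> = (\<Sum>l<n. if l = a then Pstar l b else 0)"
      by (rule sum.cong) auto
    also have "\<dots> = Pstar a b" using that(1) by (simp add: sum.delta')
    finally show ?case using Ps[OF that(1) 0] by simp
  next
    case (Suc k)
    define d where "d = (\<sigma> ^^ Suc k) (a div m)"
    have d: "d < \<tau>" unfolding d_def
      using bij_betw_funpow[OF bij, of "Suc k"] blk[OF that(1)] by (auto dest: bij_betwE)
    have "matpow n Pstar (Suc (Suc k)) a b = (\<Sum>l<n. matpow n Pstar (Suc k) a l * Pstar l b)"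
      by simp
    also have "\<dots> = (\<Sum>l<n. if l div m = d then (if \<sigma> d = b div m then 1 / real m * (1 / real m) else 0) else 0)"
      by (rule sum.cong) (use Suc Ps d_def in auto)
    also have "\<dots> = real m * (if \<sigma> d = b div m then 1 / real m * (1 / real m) else 0)"
      by (rule blocksum[OF d])
    also have "\<dots> = (if (\<sigma> ^^ Suc (Suc k)) (a div m) = b div m then 1 / real m else 0)"
      using m0 by (simp add: d_def)
    finally show ?case .
  qed
  have low: "real \<tau> / real n \<le> hit_prob n Pstar \<tau> a b" if a: "a < n" and b: "b < n" for a b
  proof -
    obtain k where "matpow \<tau> \<Pi>0 k (a div m) (b div m) > 0"
      using assms(5) blk[OF a] blk[OF b] unfolding irreducible_matrix_def by blast
    then have "(\<sigma> ^^ k) (a div m) = b div m"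
      using perm_pow[OF bij Pi blk[OF a] blk[OF b], of k] by (simp split: if_splits)
    then obtain k' where k': "k' \<in> {1..\<tau>}" "(\<sigma> ^^ k') (a div m) = b div m"
      using orbit[OF bij blk[OF a], of k] by auto
    then obtain k'' where k'': "k' = Suc k''" by (cases k') auto
    have "matpow n Pstar k' a b = 1 / real m" using pow[OF a b, of k''] k' k'' by simp
    moreover have "matpow n Pstar k' a b \<le> hit_prob n Pstar \<tau> a b"
      by (rule hit_lower[OF rs a b]) (use k' in auto)
    ultimately show ?thesis using tn by simp
  qed
  have "min_hit_prob n Pstar \<tau> \<ge> real \<tau> / real n"
    unfolding min_hit_prob_def
    by (rule Min.boundedI) (use finite_hitset n0 low in auto)
  then have eq: "min_hit_prob n Pstar \<tau> = real \<tau> / real n"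
    using min_upper[OF rs n0, of \<tau>] by simp
  show ?thesis using rs eq min_upper n0 by auto
qed

end
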